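(* Let $P(t)=\binom{r+t}{r}-\binom{r+t-d}{r}$. For every integer $D\ge 0$, every indivisible one-parameter subgroup $\lambda\in\Gamma(T)$ and every real $\delta>0$, $$E_{d+D,[\lambda],|M_D|\,\delta}=E_{d,[\lambda],\delta}$$ as subsets of $\mathrm{Hilb}^P(\mathbb{P}^r_k)$. Consequently, for all integers $t\ge d$ the Hesselink stratifications $\mathrm{Hilb}^P(\mathbb{P}^r_k)^{us}_t=\coprod_{[\lambda],\delta>0}E_{t,[\lambda],\delta}$ coincide (up to the rescaling $\delta\mapsto |M_{t-d}|\delta$ of the index $\delta$), and in particular $\mathrm{Hilb}^P(\mathbb{P}^r_k)^{us}_{d+D}=\mathrm{Hilb}^P(\mathbb{P}^r_k)^{us}_{d}$ as sets for every $D\ge 0$.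
   Context: Let $k$ be an algebraically closed field, $r\ge1$, $d\ge1$ integers, $S=k[x_0,\dots,x_r]$ graded by degree, $S_t$ its degree-$t$ part, and $M_t$ the set of monomials of degree $t$ (so $|M_t|=\binom{r+t}{r}$). Let $P(t)=\binom{r+t}{r}-\binom{r+t-d}{r}$; then $\mathrm{Hilb}^P(\mathbb{P}^r_k)$ parametrizes hypersurfaces of degree $d$: a closed point $x$ corresponds to $H_x=V(f)$ with $0\ne f\in S_d$ unique up to scalar. For $t\ge d$ put $Q(t)=\dim S_t-P(t)=|M_{t-d}|$ and let $\phi_t:\mathrm{Hilb}^P(\mathbb{P}^r_k)\to\mathbb{P}(\bigwedge^{Q(t)}S_t)$ send $x$ to the Plücker point $[\bigwedge^{Q(t)}(f\cdot S_{t-d})]$ of the degree-$t$ part of the ideal $(f)$ (the $t$-th Hilbert point). $G=\mathrm{GL}_{r+1}(k)$ acts on $S_1=\mathrm{span}(x_0,\dots,x_r)$ by the standard representation, hence on $S$, on the Hilbert scheme ($g.x$ corresponds to $g.f$) and on $\mathbb{P}(\bigwedge^{Q(t)}S_t)$, compatibly with $\phi_t$. Let $H=\mathrm{SL}_{r+1}(k)$, $T_0\subset G$ the diagonal torus, $T=T_0\cap H$. Identify $\Gamma(T_0)\cong\mathbb{Z}^{r+1}$: $\lambda=(a_0,\dots,a_r)$ means $\lambda(s)=\mathrm{diag}(s^{a_0},\dots,s^{a_r})$; then $\lambda(s)$ multiplies the monomial $x_0^{e_0}\cdots x_r^{e_r}$ by $s^{\sum a_ie_i}$, and $\Gamma(T)$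 consists of those $\lambda$ with $\sum a_i=0$. Fix a conjugation-invariant norm $\Vert\cdot\Vert$ on the set $\Gamma(G)$ of one-parameter subgroups which equals the Euclidean norm $\sqrt{\sum a_i^2}$ on $\Gamma(T_0)$. A one-parameter subgroup is indivisible if it is not $n\mu$ for an integer $n\ge2$ and a one-parameter subgroup $\mu$. For a $G$-representation $V$, $0\ne v\in V$ and $\lambda\in\Gamma(G)$, write $v=\sum_i v_i$ with $\lambda(s)v_i=s^iv_i$ and set $\mu(v,\lambda)=\min\{i: v_i\neq 0\}$ (well defined on projective points). For $t\ge d$ let $\Lambda_{x,t}$ be the (nonempty) set of indivisible $\lambda\in\Gamma(H)$ maximizing $\mu(\phi_t(x),\lambda)/\Vert\lambda\Vert$; $x$ is unstable at level $t$ if this maximum is $>0$, and $\mathrm{Hilb}^P(\mathbb{P}^r_k)^{us}_t$ is the set of such $x$. For an indivisible $\lambda\in\Gamma(T)$ and $\delta>0$, $E_{t,[\lambda],\delta}$ is the set of $x$ such that $\Lambda_{x,t}$ meets the $G$-conjugacy class $[\lambda]$ of $\lambda$ and the maximum value of $\mu(\phi_t(x),\cdot)/\Vert\cdot\Vert$ equals $\delta$ (Hesselink strata). *)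

theory Defs
  imports "HOL-Analysis.Analysis" "HOL-Computational_Algebra.Polynomial" "HOL-Library.Poly_Mapping"
begin

(* Variables x_i are indexed by a finite type 'n with CARD('n) = r+1.
  Monomials are exponent vectors 'n \<Rightarrow>\<^sub>0 nat, elements of S = k[x_i] are
  finitely supported coefficient functions on monomials (with the convolution
  product of Poly_Mapping). *)

type_synonym ('n, 'k) hpoly = "('n \<Rightarrow>\<^sub>0 nat) \<Rightarrow>\<^sub>0 'k"

definition mdeg :: "('n::finite \<Rightarrow>\<^sub>0 nat) \<Rightarrow> nat" where
  "mdeg m = (\<Sum>i\<in>UNIV. Poly_Mapping.lookup m i)"

definition mons :: "nat \<Rightarrow> ('n::finite \<Rightarrow>\<^sub>0 nat) set" where
  "mons t = {m. mdeg m = t}"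

definition homog :: "nat \<Rightarrow> ('n::finite, 'k::zero) hpoly set" where
  "homog t = {f. Poly_Mapping.keys f \<subseteq> mons t}"

definition hvar :: "'n \<Rightarrow> ('n, 'k::{zero,one}) hpoly" where
  "hvar i = Poly_Mapping.single (Poly_Mapping.single i 1) 1"

definition hconst :: "'k::zero \<Rightarrow> ('n, 'k) hpoly" where
  "hconst c = Poly_Mapping.single 0 c"

definition gl_act :: "'k::comm_ring_1^'n^'n \<Rightarrow> ('n::finite, 'k) hpoly \<Rightarrow> ('n, 'k) hpoly" where
  "gl_act g f = (\<Sum>m\<in>Poly_Mapping.keys f. hconst (Poly_Mapping.lookup f m) *
      (\<Prod>j\<in>UNIV. (\<Sum>i\<in>UNIV. hconst (g $ i $ j) * hvar i) ^ Poly_Mapping.lookup m j))"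

definition wt :: "('n::finite \<Rightarrow> int) \<Rightarrow> ('n \<Rightarrow>\<^sub>0 nat) \<Rightarrow> int" where
  "wt a m = (\<Sum>i\<in>UNIV. a i * int (Poly_Mapping.lookup m i))"

definition ops_norm :: "('n::finite \<Rightarrow> int) \<Rightarrow> real" where
  "ops_norm a = sqrt (\<Sum>i\<in>UNIV. (real_of_int (a i))\<^sup>2)"

(* One-parameter subgroups of T = T_0 \<inter> SL: sum of weights zero. *)
definition torus_H :: "('n::finite \<Rightarrow> int) set" where
  "torus_H = {a. (\<Sum>i\<in>UNIV. a i) = 0}"

definition indivisible :: "('n::finite \<Rightarrow> int) \<Rightarrow> bool" where
  "indivisible a \<longleftrightarrow> \<not> (\<exists>(n::int) b. n \<ge> 2 \<and> a = (\<lambda>i. n * b i))"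

(* mu(phi_t(f), a) for diagonal a: the Plucker coordinate of the Q(t)-dimensional
  subspace W = f * S_{t-d} of S_t at a Q(t)-subset I of M_t is nonzero iff the
  coordinate projection W \<rightarrow> k^I is injective, i.e. iff no nonzero element f*h of W
  has all its coefficients at monomials of I equal to zero; the weight of the
  basis vector e_I of the exterior power is the sum of the weights of m \<in> I. *)
definition hilb_mu :: "nat \<Rightarrow> nat \<Rightarrow> ('n::finite, 'k::comm_ring_1) hpoly \<Rightarrow> ('n \<Rightarrow> int) \<Rightarrow> int" where
  "hilb_mu d t f a = Min {(\<Sum>m\<in>I. wt a m) | I.
      I \<subseteq> mons t \<and> card I = card (mons (t - d) :: ('n \<Rightarrow>\<^sub>0 nat) set) \<and>
      (\<forall>h\<in>homog (t - d). h \<noteq> 0 \<longrightarrow> (\<exists>m\<in>I. Poly_Mapping.lookup (f * h) m \<noteq> 0))}"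

(* mu(phi_t(f), g^{-1} a g)/||.||: a general one-parameter subgroup of H is
  conjugate g^{-1} (diag a) g, and mu(v, g^{-1} lambda g) = mu(g v, lambda). *)
definition hratio :: "nat \<Rightarrow> nat \<Rightarrow> ('n::finite, 'k::comm_ring_1) hpoly \<Rightarrow> 'k^'n^'n \<Rightarrow> ('n \<Rightarrow> int) \<Rightarrow> real" where
  "hratio d t f g a = real_of_int (hilb_mu d t (gl_act g f) a) / ops_norm a"

definition is_max_value :: "nat \<Rightarrow> nat \<Rightarrow> ('n::finite, 'k::comm_ring_1) hpoly \<Rightarrow> real \<Rightarrow> bool" where
  "is_max_value d t f \<delta> \<longleftrightarrow>
     (\<exists>g b. invertible g \<and> b \<in> torus_H \<and> indivisible b \<and> hratio d t f g b = \<delta>) \<and>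
     (\<forall>g b. invertible g \<and> b \<in> torus_H \<and> indivisible b \<longrightarrow> hratio d t f g b \<le> \<delta>)"

(* Hesselink stratum E_{t,[a],delta} (as the set of nonzero equations f of degree d). *)
definition hstratum :: "nat \<Rightarrow> nat \<Rightarrow> ('n::finite \<Rightarrow> int) \<Rightarrow> real \<Rightarrow> ('n, 'k::comm_ring_1) hpoly set" where
  "hstratum d t a \<delta> = {f \<in> homog d. f \<noteq> 0 \<and> is_max_value d t f \<delta> \<and>
      (\<exists>g. invertible (g :: 'k^'n^'n) \<and> hratio d t f g a = \<delta>)}"

definition hunstable :: "nat \<Rightarrow> nat \<Rightarrow> ('n::finite, 'k::comm_ring_1) hpoly set" where
  "hunstable d t = {f \<in> homog d. f \<noteq> 0 \<and> (\<exists>\<delta>>0. is_max_value d t f \<delta>)}"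

end

theory Submission
  imports Defs "Jordan_Normal_Form.Determinant" "HOL-Library.List_Lexorder"
begin


lemma mdeg_add: "mdeg (a + b) = mdeg a + mdeg (b::'n::finite \<Rightarrow>\<^sub>0 nat)"
  by (simp add: mdeg_def lookup_add sum.distrib)

lemma wt_add: "wt c (a + b) = wt c a + wt c b"
  by (simp add: wt_def lookup_add sum.distrib algebra_simps)

lemma lookup_le_mdeg: "Poly_Mapping.lookup m i \<le> mdeg (m::'n::finite \<Rightarrow>\<^sub>0 nat)"
  unfolding mdeg_def by (rule member_le_sum) auto

lemma finite_mons: "finite (mons t :: ('n::finite \<Rightarrow>\<^sub>0 nat) set)"
proof -
  have "Poly_Mapping.lookup ` (mons t :: ('n \<Rightarrow>\<^sub>0 nat) set) \<subseteq> PiE UNIV (\<lambda>_. {..t})"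
  proof
    fix f assume "f \<in> Poly_Mapping.lookup ` (mons t :: ('n \<Rightarrow>\<^sub>0 nat) set)"
    then obtain m :: "'n \<Rightarrow>\<^sub>0 nat" where m: "m \<in> mons t" "f = Poly_Mapping.lookup m" by auto
    have "Poly_Mapping.lookup m i \<le> t" for i using lookup_le_mdeg[of m i] m(1) by (simp add: mons_def)
    thus "f \<in> PiE UNIV (\<lambda>_. {..t})" using m(2) by (simp add: PiE_def Pi_def)
  qed
  hence "finite (Poly_Mapping.lookup ` (mons t :: ('n \<Rightarrow>\<^sub>0 nat) set))"
    by (rule finite_subset) (simp add: finite_PiE)
  moreover have "inj_on Poly_Mapping.lookup (mons t :: ('n \<Rightarrow>\<^sub>0 nat) set)"
    by (simp add: inj_on_def lookup_inject)
  ultimately show ?thesis by (rule finite_imageD)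
qed

lemma mons_0: "mons 0 = {0 :: 'n::finite \<Rightarrow>\<^sub>0 nat}"
proof -
  have "m = 0" if "mdeg m = 0" for m :: "'n \<Rightarrow>\<^sub>0 nat"
  proof (rule poly_mapping_eqI)
    fix i show "Poly_Mapping.lookup m i = Poly_Mapping.lookup 0 i"
      using lookup_le_mdeg[of m i] that by simp
  qed
  moreover have "mdeg (0::'n \<Rightarrow>\<^sub>0 nat) = 0" by (simp add: mdeg_def)
  ultimately show ?thesis by (auto simp: mons_def)
qed

lemma single_in_mons: "Poly_Mapping.single i t \<in> (mons t :: ('n::finite \<Rightarrow>\<^sub>0 nat) set)"
  by (simp add: mons_def mdeg_def lookup_single when_def)

lemma card_mons_pos: "card (mons t :: ('n::finite \<Rightarrow>\<^sub>0 nat) set) > 0"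
proof -
  have "mons t \<noteq> ({} :: ('n \<Rightarrow>\<^sub>0 nat) set)" using single_in_mons by blast
  thus ?thesis using finite_mons by (simp add: card_gt_0_iff)
qed

lemma lookup_mult_keys:
  "Poly_Mapping.lookup (f * g) x = (\<Sum>k\<in>Poly_Mapping.keys f. \<Sum>n\<in>Poly_Mapping.keys g.
      if k + n = x then Poly_Mapping.lookup f k * Poly_Mapping.lookup g n else 0)"
proof -
  have i: "(\<Sum>q. Poly_Mapping.lookup g q when x = l + q) = (\<Sum>n\<in>Poly_Mapping.keys g. if l + n = x then Poly_Mapping.lookup g n else 0)" for l
    by (subst Sum_any.expand_superset[of "Poly_Mapping.keys g"]) (auto simp: when_def in_keys_iff intro!: sum.cong)
  have "Poly_Mapping.lookup (f * g) x = (\<Sum>l. Poly_Mapping.lookup f l * (\<Sum>n\<in>Poly_Mapping.keys g. if l + n = x then Poly_Mapping.lookup g n else 0))"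
    by (simp add: lookup_mult i)
  also have "\<dots> = (\<Sum>l\<in>Poly_Mapping.keys f. Poly_Mapping.lookup f l * (\<Sum>n\<in>Poly_Mapping.keys g. if l + n = x then Poly_Mapping.lookup g n else 0))"
    by (subst Sum_any.expand_superset[of "Poly_Mapping.keys f"]) (auto simp: in_keys_iff)
  also have "\<dots> = (\<Sum>k\<in>Poly_Mapping.keys f. \<Sum>n\<in>Poly_Mapping.keys g.
      if k + n = x then Poly_Mapping.lookup f k * Poly_Mapping.lookup g n else 0)"
    by (simp add: sum_distrib_left if_distrib cong: if_cong)
  finally show ?thesis .
qed

lemma lookup_mult_single:
  "Poly_Mapping.lookup (G * Poly_Mapping.single n c) x =
     (\<Sum>k\<in>Poly_Mapping.keys G. if k + n = x then Poly_Mapping.lookup G k else 0) * (c::'k::field)"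
proof (cases "c = 0")
  case True thus ?thesis by simp
next
  case False
  thus ?thesis unfolding lookup_mult_keys by (auto simp: sum_distrib_right intro!: sum.cong)
qed

lemma sum_wt_mons:
  fixes b :: "'n::finite \<Rightarrow> int"
  assumes "sum b UNIV = 0"
  shows "(\<Sum>n\<in>(mons D :: ('n \<Rightarrow>\<^sub>0 nat) set). wt b n) = 0"
proof -
  let ?M = "mons D :: ('n \<Rightarrow>\<^sub>0 nat) set"
  have c: "(\<Sum>n\<in>?M. Poly_Mapping.lookup n j) = (\<Sum>n\<in>?M. Poly_Mapping.lookup n i)" for i j
  proof -
    let ?t = "Transposition.transpose i j"
    define \<sigma> where "\<sigma> n = Abs_poly_mapping (\<lambda>k. Poly_Mapping.lookup n (?t k))" for n :: "'n \<Rightarrow>\<^sub>0 nat"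
    have ls: "Poly_Mapping.lookup (\<sigma> n) k = Poly_Mapping.lookup n (?t k)" for n k
      unfolding \<sigma>_def by simp
    have ss: "\<sigma> (\<sigma> n) = n" for n by (rule poly_mapping_eqI) (simp add: ls)
    have bt: "bij_betw ?t UNIV UNIV" by (rule permutes_imp_bij) (rule permutes_swap_id; simp)
    have md: "mdeg (\<sigma> n) = mdeg n" for n
      unfolding mdeg_def ls by (rule sum.reindex_bij_betw[OF bt])
    have bs: "bij_betw \<sigma> ?M ?M"
      by (rule bij_betwI[of _ _ _ \<sigma>]) (auto simp: mons_def md ss)
    have "(\<Sum>n\<in>?M. Poly_Mapping.lookup n j) = (\<Sum>n\<in>?M. Poly_Mapping.lookup (\<sigma> n) i)"
      by (simp add: ls)
    also have "\<dots> = (\<Sum>n\<in>?M. Poly_Mapping.lookup n i)"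
      by (rule sum.reindex_bij_betw[OF bs])
    finally show ?thesis .
  qed
  obtain i0 :: 'n where True by blast
  have "(\<Sum>n\<in>?M. wt b n) = (\<Sum>i\<in>UNIV. b i * int (\<Sum>n\<in>?M. Poly_Mapping.lookup n i))"
    unfolding wt_def by (simp add: sum.swap[of _ ?M] sum_distrib_left of_nat_sum)
  also have "\<dots> = (\<Sum>i\<in>UNIV. b i * int (\<Sum>n\<in>?M. Poly_Mapping.lookup n i0))"
    by (rule sum.cong[OF refl]) (metis c)
  also have "\<dots> = 0" using assms by (simp add: sum_distrib_right[symmetric])
  finally show ?thesis .
qed

definition lkey :: "('n::finite \<Rightarrow> int) \<Rightarrow> 'n list \<Rightarrow> ('n \<Rightarrow>\<^sub>0 nat) \<Rightarrow> int list" where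
  "lkey b xs m = wt b m # map (\<lambda>i. int (Poly_Mapping.lookup m i)) xs"

lemma map2_map: "map2 (+) (map f xs) (map g xs) = map (\<lambda>i. f i + g i) xs"
  by (induct xs) auto

lemma lkey_add: "lkey b xs (m + n) = map2 (+) (lkey b xs m) (lkey b xs (n::'n::finite \<Rightarrow>\<^sub>0 nat))"
  by (simp add: lkey_def wt_add map2_map lookup_add)

lemma length_lkey: "length (lkey b xs m) = Suc (length xs)"
  by (simp add: lkey_def)

lemma lkey_inj: "set xs = UNIV \<Longrightarrow> lkey b xs m = lkey b xs n \<Longrightarrow> m = n"
  by (rule poly_mapping_eqI) (auto simp: lkey_def map_eq_conv)

lemma map2_less: "length xs = length zs \<Longrightarrow> length ys = length zs \<Longrightarrow> (xs::int list) < ys \<Longrightarrow>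
   map2 (+) xs zs < map2 (+) ys zs"
proof (induct zs arbitrary: xs ys)
  case Nil thus ?case by simp
next
  case (Cons z zs)
  then obtain x xs' y ys' where "xs = x # xs'" "ys = y # ys'"
    by (metis length_Suc_conv)
  with Cons show ?case by auto
qed

lemma map2_comm: "map2 (+) xs ys = map2 (+) ys (xs::int list)"
proof (induct xs arbitrary: ys)
  case Nil thus ?case by simp
next
  case (Cons x xs) thus ?case by (cases ys) auto
qed

lemma map2_less2: "length xs = length zs \<Longrightarrow> length ys = length zs \<Longrightarrow> (xs::int list) < ys \<Longrightarrow>
   map2 (+) zs xs < map2 (+) zs ys"
  using map2_less map2_comm by metis

lemma min_key_exists:
  fixes b :: "'n::finite \<Rightarrow> int"
  assumes "finite K" "K \<noteq> {}" "set xs = UNIV"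
  obtains ms where "ms \<in> K" "\<And>k. k \<in> K \<Longrightarrow> lkey b xs ms \<le> lkey b xs k"
proof -
  have "Min (lkey b xs ` K) \<in> lkey b xs ` K" using assms by (intro Min_in) auto
  then obtain ms where "ms \<in> K" "lkey b xs ms = Min (lkey b xs ` K)" by auto
  with assms show ?thesis using that by (metis Min_le finite_imageI image_eqI)
qed

lemma unique_pair:
  fixes b :: "'n::finite \<Rightarrow> int"
  assumes xs: "set xs = UNIV"
    and ms: "\<And>k. k \<in> K \<Longrightarrow> lkey b xs ms \<le> lkey b xs k"
    and ns: "\<And>n. n \<in> L \<Longrightarrow> lkey b xs ns \<le> lkey b xs n"
    and k: "k \<in> K" and n: "n \<in> L" and eq: "k + n = ms + ns"
  shows "k = ms \<and> n = ns"
proof (rule ccontr)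
  let ?K = "lkey b xs"
  assume ne: "\<not> (k = ms \<and> n = ns)"
  have l: "length (?K a) = Suc (length xs)" for a by (simp add: length_lkey)
  have "?K (ms + ns) < ?K (k + n)"
  proof (cases "k = ms")
    case True
    with ne have "n \<noteq> ns" by auto
    hence "?K ns < ?K n" using ns[OF n] lkey_inj[OF xs] by (metis order.not_eq_order_implies_strict)
    thus ?thesis unfolding lkey_add True by (intro map2_less2) (simp_all add: l)
  next
    case False
    hence lt: "?K ms < ?K k" using ms[OF k] lkey_inj[OF xs] by (metis order.not_eq_order_implies_strict)
    have "?K (ms + ns) \<le> ?K (ms + n)"
    proof (cases "n = ns")
      case True thus ?thesis by simp
    next
      case False
      hence "?K ns < ?K n" using ns[OF n] lkey_inj[OF xs] by (metis order.not_eq_order_implies_strict)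
      thus ?thesis unfolding lkey_add by (intro less_imp_le map2_less2) (simp_all add: l)
    qed
    also have "?K (ms + n) < ?K (k + n)"
      unfolding lkey_add using lt by (intro map2_less) (simp_all add: l)
    finally show ?thesis .
  qed
  thus False using eq by simp
qed

lemma lkey_wt_le: "lkey b xs m \<le> lkey b xs k \<Longrightarrow> wt b m \<le> wt b k"
  by (auto simp: lkey_def)

lemma lookup_mult_nonzero_single:
  assumes "Poly_Mapping.lookup (G * Poly_Mapping.single n (1::'k::field)) x \<noteq> 0"
  shows "\<exists>k\<in>Poly_Mapping.keys G. x = k + n"
proof (rule ccontr)
  assume "\<not> ?thesis"
  hence "(\<Sum>k\<in>Poly_Mapping.keys G. if k + n = x then Poly_Mapping.lookup G k else 0) = 0"
    by (intro sum.neutral) auto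
  thus False using assms by (simp add: lookup_mult_single)
qed


lemma lower_bound:
  fixes G :: "('n::finite, 'k::field) hpoly" and b :: "'n \<Rightarrow> int"
  assumes KG: "finite (Poly_Mapping.keys G)"
    and wle: "\<And>k. k \<in> Poly_Mapping.keys G \<Longrightarrow> w \<le> wt b k"
    and b: "sum b UNIV = 0"
    and I: "finite I" "card I = card (mons D :: ('n \<Rightarrow>\<^sub>0 nat) set)"
    and V: "\<forall>h\<in>homog D. h \<noteq> 0 \<longrightarrow> (\<exists>m\<in>I. Poly_Mapping.lookup (G * h) m \<noteq> 0)"
  shows "int (card (mons D :: ('n \<Rightarrow>\<^sub>0 nat) set)) * w \<le> (\<Sum>m\<in>I. wt b m)"
proof -
  let ?N = "mons D :: ('n \<Rightarrow>\<^sub>0 nat) set"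
  let ?q = "card ?N"
  obtain e where e: "bij_betw e {0..<?q} I" using ex_bij_betw_nat_finite[OF I(1)] I(2) by auto
  obtain e' where e': "bij_betw e' {0..<?q} ?N" using ex_bij_betw_nat_finite[OF finite_mons] by blast
  define A where "A = Matrix.mat ?q ?q (\<lambda>(i,j). Poly_Mapping.lookup (G * Poly_Mapping.single (e' j) 1) (e i))"
  have Acar: "A \<in> carrier_mat ?q ?q" by (simp add: A_def)
  have sc: "Poly_Mapping.lookup (G * Poly_Mapping.single n c) x
      = Poly_Mapping.lookup (G * Poly_Mapping.single n 1) x * c" for n c x
    by (simp only: lookup_mult_single mult_1_right)
  have lin: "Poly_Mapping.lookup (G * (\<Sum>j\<in>{0..<?q}. Poly_Mapping.single (e' j) (c j))) x
      = (\<Sum>j\<in>{0..<?q}. Poly_Mapping.lookup (G * Poly_Mapping.single (e' j) 1) x * c j)" for c x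
  proof -
    have "G * (\<Sum>j\<in>{0..<?q}. Poly_Mapping.single (e' j) (c j)) = (\<Sum>j\<in>{0..<?q}. G * Poly_Mapping.single (e' j) (c j))"
      by (rule sum_distrib_left)
    hence "Poly_Mapping.lookup (G * (\<Sum>j\<in>{0..<?q}. Poly_Mapping.single (e' j) (c j))) x
       = (\<Sum>j\<in>{0..<?q}. Poly_Mapping.lookup (G * Poly_Mapping.single (e' j) (c j)) x)"
      by (simp only: lookup_sum)
    also have "\<dots> = (\<Sum>j\<in>{0..<?q}. Poly_Mapping.lookup (G * Poly_Mapping.single (e' j) 1) x * c j)"
      by (rule sum.cong[OF refl]) (rule sc)
    finally show ?thesis .
  qed
  have "Determinant.det A \<noteq> 0"
  proof
    assume "Determinant.det A = 0"
    hence "\<exists>v. v \<in> carrier_vec ?q \<and> v \<noteq> 0\<^sub>v ?q \<and> A *\<^sub>v v = 0\<^sub>v ?q"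
      by (simp only: det_0_iff_vec_prod_zero[OF Acar])
    then obtain v where v: "v \<in> carrier_vec ?q" "v \<noteq> 0\<^sub>v ?q" "A *\<^sub>v v = 0\<^sub>v ?q"
      by blast
    have "\<not> (\<forall>j<?q. v $ j = 0)"
    proof
      assume "\<forall>j<?q. v $ j = 0"
      hence "v = 0\<^sub>v ?q" using v(1) by (intro eq_vecI) auto
      thus False using v(2) by simp
    qed
    then obtain j0 where j0: "j0 < ?q" "v $ j0 \<noteq> 0" by blast
    define h where "h = (\<Sum>j\<in>{0..<?q}. Poly_Mapping.single (e' j) (v $ j))"
    have "Poly_Mapping.keys h \<subseteq> ?N"
    proof
      fix m assume "m \<in> Poly_Mapping.keys h"
      hence "m \<in> (\<Union>j\<in>{0..<?q}. Poly_Mapping.keys (Poly_Mapping.single (e' j) (v $ j)))"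
        unfolding h_def by (rule subsetD[OF keys_sum])
      then obtain j where j: "j \<in> {0..<?q}" "m \<in> Poly_Mapping.keys (Poly_Mapping.single (e' j) (v $ j))"
        by blast
      hence "m = e' j" by (simp split: if_splits)
      thus "m \<in> ?N" using bij_betwE[OF e'] j(1) by blast
    qed
    hence hD: "h \<in> homog D" by (simp add: homog_def)
    have "Poly_Mapping.lookup h (e' j0) = (\<Sum>j\<in>{0..<?q}. if j = j0 then v $ j else 0)"
      unfolding h_def lookup_sum lookup_single
      by (rule sum.cong[OF refl]) (use e' j0 in \<open>auto simp: when_def bij_betw_def inj_on_def\<close>)
    also have "\<dots> = v $ j0" using j0 by simp
    finally have "h \<noteq> 0" using j0 by auto
    with V hD obtain m where m: "m \<in> I" "Poly_Mapping.lookup (G * h) m \<noteq> 0" by blast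
    then obtain i where i: "i < ?q" "m = e i" using e by (auto simp: bij_betw_def)
    have "Poly_Mapping.lookup (G * h) (e i) = (A *\<^sub>v v) $ i"
      using i v(1) unfolding h_def lin
      by (simp add: A_def scalar_prod_def row_def)
    also have "\<dots> = 0" using v(3) i by simp
    finally show False using m i by simp
  qed
  hence "(\<Sum>p\<in>{p. p permutes {0..<?q}}. signof p * (\<Prod>i=0..<?q. A $$ (i, p i))) \<noteq> 0"
    by (simp only: det_def'[OF Acar] not_False_eq_True)
  then obtain p where p0: "p \<in> {p. p permutes {0..<?q}}" "signof p * (\<Prod>i=0..<?q. A $$ (i, p i)) \<noteq> 0"
    by (rule sum.not_neutral_contains_not_neutral)
  have p: "p permutes {0..<?q}" "(\<Prod>i=0..<?q. A $$ (i, p i)) \<noteq> 0" using p0 by auto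
  have pnz: "A $$ (i, p i) \<noteq> 0" if "i < ?q" for i
  proof
    assume "A $$ (i, p i) = 0"
    hence "(\<Prod>i=0..<?q. A $$ (i, p i)) = 0" using that by (intro prod_zero) auto
    thus False using p(2) by simp
  qed
  have pq: "p i < ?q" if "i < ?q" for i using p(1) that by (simp add: permutes_in_image)
  have wi: "w + wt b (e' (p i)) \<le> wt b (e i)" if i: "i < ?q" for i
  proof -
    have "Poly_Mapping.lookup (G * Poly_Mapping.single (e' (p i)) 1) (e i) \<noteq> 0"
      using pnz[OF i] pq[OF i] i by (simp add: A_def)
    then obtain k where "k \<in> Poly_Mapping.keys G" "e i = k + e' (p i)"
      using lookup_mult_nonzero_single by blast
    thus ?thesis using wle by (simp add: wt_add)
  qed
  have "int ?q * w = (\<Sum>i\<in>{0..<?q}. w + wt b (e' (p i)))"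
  proof -
    have "(\<Sum>i\<in>{0..<?q}. wt b (e' (p i))) = (\<Sum>i\<in>{0..<?q}. wt b (e' i))"
      using sum.reindex_bij_betw[OF permutes_imp_bij[OF p(1)], of "\<lambda>i. wt b (e' i)"] by simp
    also have "\<dots> = (\<Sum>n\<in>?N. wt b n)" by (rule sum.reindex_bij_betw[OF e'])
    also have "\<dots> = 0" by (rule sum_wt_mons[OF b])
    finally show ?thesis by (simp add: sum.distrib)
  qed
  also have "\<dots> \<le> (\<Sum>i\<in>{0..<?q}. wt b (e i))" by (rule sum_mono) (use wi in auto)
  also have "\<dots> = (\<Sum>m\<in>I. wt b m)" by (rule sum.reindex_bij_betw[OF e])
  finally show ?thesis .
qed




lemma achieve:
  fixes G :: "('n::finite, 'k::field) hpoly" and b :: "'n \<Rightarrow> int"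
  assumes G: "G \<in> homog d" "G \<noteq> 0"
    and b: "sum b UNIV = 0"
  shows "\<exists>I. I \<subseteq> mons (d + D) \<and> card I = card (mons D :: ('n \<Rightarrow>\<^sub>0 nat) set) \<and>
      (\<forall>h\<in>homog D. h \<noteq> 0 \<longrightarrow> (\<exists>m\<in>I. Poly_Mapping.lookup (G * h) m \<noteq> 0)) \<and>
      (\<Sum>m\<in>I. wt b m) = int (card (mons D :: ('n \<Rightarrow>\<^sub>0 nat) set)) * Min (wt b ` Poly_Mapping.keys G)"
proof -
  let ?N = "mons D :: ('n \<Rightarrow>\<^sub>0 nat) set"
  have KG: "finite (Poly_Mapping.keys G)" "Poly_Mapping.keys G \<noteq> {}" "Poly_Mapping.keys G \<subseteq> mons d"
    using G by (auto simp: homog_def)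
  obtain xs :: "'n list" where xs: "set xs = UNIV" using finite_list[of "UNIV :: 'n set"] by auto
  obtain ms where ms: "ms \<in> Poly_Mapping.keys G" "\<And>k. k \<in> Poly_Mapping.keys G \<Longrightarrow> lkey b xs ms \<le> lkey b xs k"
    using min_key_exists[where b=b, OF KG(1,2) xs] by blast
  have wms: "wt b ms = Min (wt b ` Poly_Mapping.keys G)"
  proof (rule sym, rule Min_eqI)
    show "finite (wt b ` Poly_Mapping.keys G)" using KG by simp
    show "wt b ms \<in> wt b ` Poly_Mapping.keys G" using ms by simp
    fix y assume "y \<in> wt b ` Poly_Mapping.keys G"
    then obtain k where k: "k \<in> Poly_Mapping.keys G" "y = wt b k" by auto
    show "wt b ms \<le> y" unfolding k(2) by (rule lkey_wt_le[OF ms(2)[OF k(1)]])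
  qed
  define I where "I = (\<lambda>n. ms + n) ` ?N"
  have inj: "inj_on (\<lambda>n. ms + n) ?N" by (simp add: inj_on_def)
  have cI: "card I = card ?N" unfolding I_def by (rule card_image[OF inj])
  have sI: "I \<subseteq> mons (d + D)" using ms(1) KG(3) by (auto simp: I_def mons_def mdeg_add)
  have sumI: "(\<Sum>m\<in>I. wt b m) = int (card ?N) * wt b ms"
  proof -
    have "(\<Sum>m\<in>I. wt b m) = (\<Sum>n\<in>?N. wt b (ms + n))"
      unfolding I_def by (rule sum.reindex[OF inj, unfolded comp_def])
    also have "\<dots> = (\<Sum>n\<in>?N. wt b ms) + (\<Sum>n\<in>?N. wt b n)"
      by (simp add: wt_add sum.distrib)
    also have "\<dots> = int (card ?N) * wt b ms" using sum_wt_mons[OF b] by simp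
    finally show ?thesis .
  qed
  have V: "\<exists>m\<in>I. Poly_Mapping.lookup (G * h) m \<noteq> 0" if h: "h \<in> homog D" "h \<noteq> 0" for h
  proof -
    have KH: "finite (Poly_Mapping.keys h)" "Poly_Mapping.keys h \<noteq> {}" "Poly_Mapping.keys h \<subseteq> ?N"
      using h by (auto simp: homog_def)
    obtain ns where ns: "ns \<in> Poly_Mapping.keys h" "\<And>n. n \<in> Poly_Mapping.keys h \<Longrightarrow> lkey b xs ns \<le> lkey b xs n"
      using min_key_exists[where b=b, OF KH(1,2) xs] by blast
    have uq: "k = ms \<and> n = ns" if "k \<in> Poly_Mapping.keys G" "n \<in> Poly_Mapping.keys h" "k + n = ms + ns" for k n
      using unique_pair[OF xs ms(2) ns(2) that] .
    have "Poly_Mapping.lookup (G * h) (ms + ns) =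
       (\<Sum>k\<in>Poly_Mapping.keys G. \<Sum>n\<in>Poly_Mapping.keys h.
          if k = ms \<and> n = ns then Poly_Mapping.lookup G k * Poly_Mapping.lookup h n else 0)"
      unfolding lookup_mult_keys
    proof (intro sum.cong refl)
      fix k n assume kn: "k \<in> Poly_Mapping.keys G" "n \<in> Poly_Mapping.keys h"
      show "(if k + n = ms + ns then Poly_Mapping.lookup G k * Poly_Mapping.lookup h n else 0) =
        (if k = ms \<and> n = ns then Poly_Mapping.lookup G k * Poly_Mapping.lookup h n else 0)"
      proof (cases "k + n = ms + ns")
        case True thus ?thesis using uq[OF kn True] by simp
      next
        case False
        hence "\<not> (k = ms \<and> n = ns)" by auto
        thus ?thesis using False by (simp only: if_not_P)
      qed
    qed
    also have "\<dots> = (\<Sum>k\<in>Poly_Mapping.keys G. if k = ms then Poly_Mapping.lookup G ms * Poly_Mapping.lookup h ns else 0)"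
    proof (rule sum.cong[OF refl])
      fix k assume "k \<in> Poly_Mapping.keys G"
      show "(\<Sum>n\<in>Poly_Mapping.keys h. if k = ms \<and> n = ns then Poly_Mapping.lookup G k * Poly_Mapping.lookup h n else 0)
         = (if k = ms then Poly_Mapping.lookup G ms * Poly_Mapping.lookup h ns else 0)"
        using ns(1) KH(1) by (cases "k = ms") simp_all
    qed
    also have "\<dots> = Poly_Mapping.lookup G ms * Poly_Mapping.lookup h ns"
      using ms(1) KG(1) by simp
    also have "\<dots> \<noteq> 0" using ms(1) ns(1) by (simp add: in_keys_iff)
    finally have "Poly_Mapping.lookup (G * h) (ms + ns) \<noteq> 0" .
    moreover have "ms + ns \<in> I" using ns(1) KH(3) by (auto simp: I_def)
    ultimately show ?thesis by blast
  qed
  show ?thesis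
    by (rule exI[of _ I]) (simp only: sI cI sumI wms V simp_thms ball_simps; blast intro: V)
qed

lemma hilb_mu_key:
  fixes G :: "('n::finite, 'k::field) hpoly" and b :: "'n \<Rightarrow> int"
  assumes G: "G \<in> homog d" "G \<noteq> 0"
    and b: "sum b UNIV = 0"
  shows "hilb_mu d (d + D) G b = int (card (mons D :: ('n \<Rightarrow>\<^sub>0 nat) set)) * Min (wt b ` Poly_Mapping.keys G)"
proof -
  let ?N = "mons D :: ('n \<Rightarrow>\<^sub>0 nat) set"
  let ?P = "\<lambda>I. I \<subseteq> mons (d + D) \<and> card I = card ?N \<and>
      (\<forall>h\<in>homog D. h \<noteq> 0 \<longrightarrow> (\<exists>m\<in>I. Poly_Mapping.lookup (G * h) m \<noteq> 0))"
  have KG: "finite (Poly_Mapping.keys G)" using G by simp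
  have eq: "hilb_mu d (d + D) G b = Min ((\<lambda>I. \<Sum>m\<in>I. wt b m) ` {I. ?P I})"
    unfolding hilb_mu_def by (simp add: setcompr_eq_image)
  show ?thesis unfolding eq
  proof (rule Min_eqI)
    have "{I. ?P I} \<subseteq> Pow (mons (d + D))" by auto
    hence "finite {I. ?P I}" by (rule finite_subset) (simp add: finite_mons)
    thus "finite ((\<lambda>I. \<Sum>m\<in>I. wt b m) ` {I. ?P I})" by simp
  next
    fix y assume "y \<in> (\<lambda>I. \<Sum>m\<in>I. wt b m) ` {I. ?P I}"
    then obtain I where I: "?P I" "y = (\<Sum>m\<in>I. wt b m)" by auto
    have fI: "finite I" using I(1) finite_mons finite_subset by blast
    show "int (card ?N) * Min (wt b ` Poly_Mapping.keys G) \<le> y"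
      unfolding I(2)
      by (rule lower_bound[OF KG _ b fI]) (use I(1) KG in auto)
  next
    show "int (card ?N) * Min (wt b ` Poly_Mapping.keys G) \<in> (\<lambda>I. \<Sum>m\<in>I. wt b m) ` {I. ?P I}"
    proof -
      obtain I where "?P I" "(\<Sum>m\<in>I. wt b m) = int (card ?N) * Min (wt b ` Poly_Mapping.keys G)"
        using achieve[OF G b, of D] by blast
      thus ?thesis by (intro image_eqI[of _ _ I]) auto
    qed
  qed
qed



definition Lf :: "'k::comm_ring_1^'n^'n \<Rightarrow> 'n::finite \<Rightarrow> ('n, 'k) hpoly" where
  "Lf g j = (\<Sum>i\<in>UNIV. hconst (g $ i $ j) * hvar i)"

definition Ef :: "'k::comm_ring_1^'n^'n \<Rightarrow> ('n::finite \<Rightarrow>\<^sub>0 nat) \<Rightarrow> ('n, 'k) hpoly" where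
  "Ef g m = (\<Prod>j\<in>UNIV. Lf g j ^ Poly_Mapping.lookup m j)"

lemma gl_act_alt: "gl_act g f = (\<Sum>m\<in>Poly_Mapping.keys f. hconst (Poly_Mapping.lookup f m) * Ef g m)"
  by (simp add: gl_act_def Ef_def Lf_def)

lemma hconst_0 [simp]: "hconst 0 = 0" by (simp add: hconst_def)
lemma hconst_1 [simp]: "hconst 1 = 1" by (simp add: hconst_def)
lemma hconst_add: "hconst (a + b) = hconst a + hconst b" by (simp add: hconst_def single_add)
lemma hconst_mult: "hconst (a * b) = (hconst a * hconst b :: ('n::finite, 'k::comm_ring_1) hpoly)"
  by (simp add: hconst_def mult_single)
lemma hconst_sum: "hconst (sum f A) = (\<Sum>a\<in>A. hconst (f a) :: ('n::finite, 'k::comm_ring_1) hpoly)"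
  by (induct A rule: infinite_finite_induct) (simp_all add: hconst_add)

lemma gl_act_superset:
  assumes "finite S" "Poly_Mapping.keys f \<subseteq> S"
  shows "gl_act g f = (\<Sum>m\<in>S. hconst (Poly_Mapping.lookup f m) * Ef g m)"
  unfolding gl_act_alt
  by (rule sum.mono_neutral_left[OF assms]) (simp add: in_keys_iff)

lemma gl_act_zero [simp]: "gl_act g 0 = 0" by (simp add: gl_act_alt)

lemma gl_act_add: "gl_act g (p + q) = gl_act g p + gl_act g q"
proof -
  let ?S = "Poly_Mapping.keys p \<union> Poly_Mapping.keys q"
  have "gl_act g (p + q) = (\<Sum>m\<in>?S. hconst (Poly_Mapping.lookup (p + q) m) * Ef g m)"
    by (rule gl_act_superset) (auto simp: keys_add)
  also have "\<dots> = (\<Sum>m\<in>?S. hconst (Poly_Mapping.lookup p m) * Ef g m) + (\<Sum>m\<in>?S. hconst (Poly_Mapping.lookup q m) * Ef g m)"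
    by (simp add: lookup_add hconst_add distrib_right sum.distrib)
  also have "\<dots> = gl_act g p + gl_act g q"
    by (simp add: gl_act_superset[symmetric])
  finally show ?thesis .
qed

lemma gl_act_sum: "gl_act g (sum F A) = (\<Sum>a\<in>A. gl_act g (F a))"
  by (induct A rule: infinite_finite_induct) (simp_all add: gl_act_add)

lemma gl_act_single: "gl_act g (Poly_Mapping.single m c) = hconst c * Ef g m"
proof -
  have "gl_act g (Poly_Mapping.single m c) = (\<Sum>m'\<in>{m}. hconst (Poly_Mapping.lookup (Poly_Mapping.single m c) m') * Ef g m')"
    by (rule gl_act_superset) auto
  thus ?thesis by simp
qed

lemma Ef_add: "Ef g (m + n) = Ef g m * Ef g n"
  by (simp add: Ef_def lookup_add power_add prod.distrib)

lemma Ef_0 [simp]: "Ef g 0 = 1" by (simp add: Ef_def)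

lemma poly_expand: "f = (\<Sum>m\<in>Poly_Mapping.keys f. Poly_Mapping.single m (Poly_Mapping.lookup f m))"
proof (rule poly_mapping_eqI)
  fix x
  have "Poly_Mapping.lookup (\<Sum>m\<in>Poly_Mapping.keys f. Poly_Mapping.single m (Poly_Mapping.lookup f m)) x
     = (\<Sum>m\<in>Poly_Mapping.keys f. if m = x then Poly_Mapping.lookup f m else 0)"
    by (simp add: lookup_sum lookup_single when_def)
  also have "\<dots> = Poly_Mapping.lookup f x" by (simp add: in_keys_iff)
  finally show "Poly_Mapping.lookup f x = Poly_Mapping.lookup (\<Sum>m\<in>Poly_Mapping.keys f. Poly_Mapping.single m (Poly_Mapping.lookup f m)) x" by simp
qed

lemma gl_act_mult: "gl_act g (p * q) = gl_act g p * gl_act g (q :: ('n::finite, 'k::comm_ring_1) hpoly)"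
proof -
  let ?P = "Poly_Mapping.keys p" and ?Q = "Poly_Mapping.keys q"
  have "p * q = (\<Sum>m\<in>?P. Poly_Mapping.single m (Poly_Mapping.lookup p m)) * (\<Sum>n\<in>?Q. Poly_Mapping.single n (Poly_Mapping.lookup q n))"
    using poly_expand[of p] poly_expand[of q] by simp
  also have "\<dots> = (\<Sum>m\<in>?P. \<Sum>n\<in>?Q. Poly_Mapping.single (m + n) (Poly_Mapping.lookup p m * Poly_Mapping.lookup q n))"
    by (simp add: sum_product mult_single)
  finally have pq: "p * q = \<dots>" .
  have "gl_act g (p * q) = (\<Sum>m\<in>?P. \<Sum>n\<in>?Q. hconst (Poly_Mapping.lookup p m) * Ef g m * (hconst (Poly_Mapping.lookup q n) * Ef g n))"
    unfolding pq gl_act_sum gl_act_single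
    by (intro sum.cong refl) (simp add: hconst_mult Ef_add mult_ac)
  also have "\<dots> = gl_act g p * gl_act g q"
    by (simp add: gl_act_alt sum_product)
  finally show ?thesis .
qed

lemma gl_act_one [simp]: "gl_act g 1 = 1"
  using gl_act_single[of g 0 1] by simp

lemma gl_act_hconst [simp]: "gl_act g (hconst c) = hconst c"
  by (simp add: hconst_def gl_act_single)

lemma gl_act_power: "gl_act g (p ^ n) = gl_act g p ^ n"
  by (induct n) (simp_all add: gl_act_mult)

lemma gl_act_prod: "gl_act g (prod F A) = (\<Prod>a\<in>A. gl_act g (F a))"
  by (induct A rule: infinite_finite_induct) (simp_all add: gl_act_mult)

lemma gl_act_hvar: "gl_act g (hvar i) = Lf g i"
proof -
  have "Ef g (Poly_Mapping.single i 1) = (\<Prod>j\<in>UNIV. if j = i then Lf g j else 1)"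
    unfolding Ef_def by (intro prod.cong refl) (simp add: lookup_single when_def)
  also have "\<dots> = Lf g i" by simp
  finally show ?thesis by (simp add: hvar_def gl_act_single)
qed

lemma gl_act_Lf: "gl_act h (Lf g j) = Lf (h ** g) j"
proof -
  have "gl_act h (Lf g j) = (\<Sum>i\<in>UNIV. hconst (g $ i $ j) * (\<Sum>k\<in>UNIV. hconst (h $ k $ i) * hvar k))"
    by (simp add: Lf_def gl_act_sum gl_act_mult gl_act_hvar)
  also have "\<dots> = (\<Sum>i\<in>UNIV. \<Sum>k\<in>UNIV. hconst (h $ k $ i * g $ i $ j) * hvar k)"
    by (simp add: sum_distrib_left hconst_mult mult_ac)
  also have "\<dots> = (\<Sum>k\<in>UNIV. \<Sum>i\<in>UNIV. hconst (h $ k $ i * g $ i $ j) * hvar k)"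
    by (rule sum.swap)
  also have "\<dots> = Lf (h ** g) j"
    by (simp add: Lf_def matrix_matrix_mult_def hconst_sum sum_distrib_right)
  finally show ?thesis .
qed

lemma gl_act_Ef: "gl_act h (Ef g m) = Ef (h ** g) m"
  by (simp add: Ef_def gl_act_prod gl_act_power gl_act_Lf)

lemma gl_act_comp: "gl_act h (gl_act g f) = gl_act (h ** g) f"
  unfolding gl_act_alt[of g f] gl_act_alt[of "h ** g" f]
  by (simp only: gl_act_sum gl_act_mult gl_act_Ef gl_act_hconst)

lemma hvar_power: "hvar j ^ k = (Poly_Mapping.single (Poly_Mapping.single j k) 1 :: ('n::finite, 'k::comm_ring_1) hpoly)"
  by (induct k) (simp_all add: hvar_def mult_single single_add[symmetric] mult.commute)

lemma prod_single_one: "finite A \<Longrightarrow> (\<Prod>j\<in>A. Poly_Mapping.single (F j) (1::'k::comm_ring_1)) = Poly_Mapping.single (\<Sum>j\<in>A. F j) 1"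
  by (induct A rule: finite_induct) (simp_all add: mult_single)

lemma sum_single_lookup: "(\<Sum>j\<in>UNIV. Poly_Mapping.single j (Poly_Mapping.lookup m j)) = (m :: 'n::finite \<Rightarrow>\<^sub>0 nat)"
  by (rule poly_mapping_eqI) (simp add: lookup_sum lookup_single when_def)

lemma Lf_id: "Lf (Finite_Cartesian_Product.mat 1) j = (hvar j :: ('n::finite, 'k::comm_ring_1) hpoly)"
proof -
  have "Lf (Finite_Cartesian_Product.mat 1) j = (\<Sum>i\<in>UNIV. if i = j then hvar i else (0::('n, 'k) hpoly))"
    unfolding Lf_def by (intro sum.cong refl) (simp add: Finite_Cartesian_Product.mat_def)
  thus ?thesis by simp
qed

lemma Ef_id: "Ef (Finite_Cartesian_Product.mat 1) m = (Poly_Mapping.single m 1 :: ('n::finite, 'k::comm_ring_1) hpoly)"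
  by (simp add: Ef_def Lf_id hvar_power prod_single_one sum_single_lookup)

lemma gl_act_id: "gl_act (Finite_Cartesian_Product.mat 1) f = (f :: ('n::finite, 'k::comm_ring_1) hpoly)"
proof -
  have "gl_act (Finite_Cartesian_Product.mat 1) f = (\<Sum>m\<in>Poly_Mapping.keys f. Poly_Mapping.single m (Poly_Mapping.lookup f m))"
    by (simp add: gl_act_alt Ef_id hconst_def mult_single)
  thus ?thesis using poly_expand[of f] by simp
qed

lemma gl_act_nonzero:
  assumes "invertible g" "f \<noteq> 0"
  shows "gl_act g f \<noteq> (0 :: ('n::finite, 'k::comm_ring_1) hpoly)"
proof
  assume z: "gl_act g f = 0"
  from assms(1) obtain g' where "g' ** g = Finite_Cartesian_Product.mat 1" by (auto simp: invertible_def)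
  hence "gl_act g' (gl_act g f) = f" by (simp add: gl_act_comp gl_act_id)
  thus False using z assms(2) by simp
qed


lemma homog_mult: "p \<in> homog a \<Longrightarrow> q \<in> homog b \<Longrightarrow> p * q \<in> (homog (a + b) :: ('n::finite, 'k::comm_ring_1) hpoly set)"
  unfolding homog_def mons_def using keys_mult[of p q] by (fastforce simp: mdeg_add)

lemma homog_add: "p \<in> homog a \<Longrightarrow> q \<in> homog a \<Longrightarrow> p + q \<in> (homog a :: ('n::finite, 'k::comm_ring_1) hpoly set)"
  unfolding homog_def using keys_add[of p q] by blast

lemma homog_zero: "0 \<in> homog a" by (simp add: homog_def)

lemma homog_sum: "(\<And>x. x \<in> A \<Longrightarrow> F x \<in> homog a) \<Longrightarrow> sum F A \<in> (homog a :: ('n::finite, 'k::comm_ring_1) hpoly set)"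
  by (induct A rule: infinite_finite_induct) (simp_all add: homog_zero homog_add)

lemma homog_one: "1 \<in> (homog 0 :: ('n::finite, 'k::comm_ring_1) hpoly set)"
  by (simp add: homog_def mons_0)

lemma homog_hconst: "hconst c \<in> (homog 0 :: ('n::finite, 'k::comm_ring_1) hpoly set)"
  by (simp add: homog_def mons_0 hconst_def)

lemma homog_hvar: "hvar i \<in> (homog 1 :: ('n::finite, 'k::comm_ring_1) hpoly set)"
  by (simp add: homog_def hvar_def single_in_mons[of i 1, simplified])

lemma homog_prod: "finite A \<Longrightarrow> (\<And>x. x \<in> A \<Longrightarrow> F x \<in> homog (dg x)) \<Longrightarrow> prod F A \<in> (homog (sum dg A) :: ('n::finite, 'k::comm_ring_1) hpoly set)"
  by (induct A rule: finite_induct) (simp_all add: homog_one homog_mult)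

lemma homog_power: "p \<in> homog a \<Longrightarrow> p ^ k \<in> (homog (a * k) :: ('n::finite, 'k::comm_ring_1) hpoly set)"
proof (induct k)
  case 0 thus ?case by (simp add: homog_one)
next
  case (Suc k)
  hence "p * p ^ k \<in> homog (a + a * k)" by (intro homog_mult)
  thus ?case by simp
qed

lemma homog_Lf: "Lf g j \<in> (homog 1 :: ('n::finite, 'k::comm_ring_1) hpoly set)"
  unfolding Lf_def using homog_mult[OF homog_hconst homog_hvar] by (intro homog_sum) simp

lemma homog_Ef: "Ef g m \<in> (homog (mdeg m) :: ('n::finite, 'k::comm_ring_1) hpoly set)"
  unfolding Ef_def mdeg_def using homog_power[OF homog_Lf] by (intro homog_prod) simp_all

lemma homog_gl_act: "f \<in> homog d \<Longrightarrow> gl_act g f \<in> (homog d :: ('n::finite, 'k::comm_ring_1) hpoly set)"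
  unfolding gl_act_alt
proof (rule homog_sum)
  fix m assume "f \<in> homog d" "m \<in> Poly_Mapping.keys f"
  hence md: "mdeg m = d" by (auto simp: homog_def mons_def)
  have "hconst (Poly_Mapping.lookup f m) * Ef g m \<in> homog (0 + mdeg m)"
    by (rule homog_mult[OF homog_hconst homog_Ef])
  thus "hconst (Poly_Mapping.lookup f m) * Ef g m \<in> homog d" using md by simp
qed

lemma hratio_scale:
  fixes f :: "('n::finite, 'k::field) hpoly"
  assumes f: "f \<in> homog d" "f \<noteq> 0" and g: "invertible g" and b: "b \<in> torus_H"
  shows "hratio d (d + D) f g b = real (card (mons D :: ('n \<Rightarrow>\<^sub>0 nat) set)) * hratio d d f g b"
proof -
  let ?G = "gl_act g f"
  have G: "?G \<in> homog d" "?G \<noteq> 0" using homog_gl_act[OF f(1)] gl_act_nonzero[OF g f(2)] by auto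
  have bs: "sum b UNIV = 0" using b by (simp add: torus_H_def)
  have "hilb_mu d d ?G b = hilb_mu d (d + 0) ?G b" by simp
  also have "\<dots> = Min (wt b ` Poly_Mapping.keys ?G)"
    using hilb_mu_key[OF G bs, of 0] by (simp add: mons_0)
  finally have e0: "hilb_mu d d ?G b = Min (wt b ` Poly_Mapping.keys ?G)" .
  show ?thesis
    unfolding hratio_def hilb_mu_key[OF G bs] e0 by simp
qed

lemma is_max_scale:
  fixes f :: "('n::finite, 'k::field) hpoly"
  assumes f: "f \<in> homog d" "f \<noteq> 0"
  shows "is_max_value d (d + D) f (real (card (mons D :: ('n \<Rightarrow>\<^sub>0 nat) set)) * x) = is_max_value d d f x"
proof -
  let ?q = "real (card (mons D :: ('n \<Rightarrow>\<^sub>0 nat) set))"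
  have q: "?q > 0" using card_mons_pos by simp
  have hs: "\<And>g b. invertible g \<Longrightarrow> b \<in> torus_H \<Longrightarrow> hratio d (d + D) f g b = ?q * hratio d d f g b"
    using hratio_scale[OF f] by blast
  show ?thesis
    unfolding is_max_value_def
  proof (intro iffI conjI; elim conjE)
    assume A: "\<exists>g b. invertible g \<and> b \<in> torus_H \<and> indivisible b \<and> hratio d (d + D) f g b = ?q * x"
      and B: "\<forall>g b. invertible g \<and> b \<in> torus_H \<and> indivisible b \<longrightarrow> hratio d (d + D) f g b \<le> ?q * x"
    from A obtain g b where gb: "invertible g" "b \<in> torus_H" "indivisible b" "hratio d (d + D) f g b = ?q * x"
      by blast
    have "hratio d d f g b = x" using gb(4) hs[OF gb(1,2)] q by simp
    thus "\<exists>g b. invertible g \<and> b \<in> torus_H \<and> indivisible b \<and> hratio d d f g b = x"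
      using gb by blast
    show "\<forall>g b. invertible g \<and> b \<in> torus_H \<and> indivisible b \<longrightarrow> hratio d d f g b \<le> x"
    proof (intro allI impI)
      fix g :: "'k^'n^'n" and b :: "'n \<Rightarrow> int" assume gb: "invertible g \<and> b \<in> torus_H \<and> indivisible b"
      hence "?q * hratio d d f g b \<le> ?q * x" using B hs by metis
      thus "hratio d d f g b \<le> x" using q by simp
    qed
  next
    assume A: "\<exists>g b. invertible g \<and> b \<in> torus_H \<and> indivisible b \<and> hratio d d f g b = x"
      and B: "\<forall>g b. invertible g \<and> b \<in> torus_H \<and> indivisible b \<longrightarrow> hratio d d f g b \<le> x"
    from A obtain g b where gb: "invertible g" "b \<in> torus_H" "indivisible b" "hratio d d f g b = x"
      by blast
    have "hratio d (d + D) f g b = ?q * x" using gb(4) hs[OF gb(1,2)] by simp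
    thus "\<exists>g b. invertible g \<and> b \<in> torus_H \<and> indivisible b \<and> hratio d (d + D) f g b = ?q * x"
      using gb by blast
    show "\<forall>g b. invertible g \<and> b \<in> torus_H \<and> indivisible b \<longrightarrow> hratio d (d + D) f g b \<le> ?q * x"
    proof (intro allI impI)
      fix g :: "'k^'n^'n" and b :: "'n \<Rightarrow> int" assume gb: "invertible g \<and> b \<in> torus_H \<and> indivisible b"
      hence "hratio d d f g b \<le> x" using B by blast
      thus "hratio d (d + D) f g b \<le> ?q * x" using q gb hs by simp
    qed
  qed
qed

theorem theorem1:
  fixes a :: "'n::finite \<Rightarrow> int" and d D :: nat and \<delta> :: real
  assumes "CARD('n) \<ge> 2"
    and "d \<ge> 1"
    and "a \<in> torus_H" and "indivisible a"
    and "\<delta> > 0"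
  shows "(hstratum d (d + D) a (real (card (mons D :: ('n \<Rightarrow>\<^sub>0 nat) set)) * \<delta>)
            :: ('n, 'k::alg_closed_field) hpoly set)
         = hstratum d d a \<delta>
       \<and> (hunstable d (d + D) :: ('n, 'k) hpoly set) = hunstable d d"
proof
  let ?q = "real (card (mons D :: ('n \<Rightarrow>\<^sub>0 nat) set))"
  have q: "?q > 0" using card_mons_pos by simp
  show "(hstratum d (d + D) a (?q * \<delta>) :: ('n, 'k) hpoly set) = hstratum d d a \<delta>"
  proof (rule Set.set_eqI)
    fix f :: "('n, 'k) hpoly"
    show "f \<in> hstratum d (d + D) a (?q * \<delta>) \<longleftrightarrow> f \<in> hstratum d d a \<delta>"
    proof (cases "f \<in> homog d \<and> f \<noteq> 0")
      case True
      hence hs: "\<And>g. invertible g \<Longrightarrow> hratio d (d + D) f g a = ?q * hratio d d f g a"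
        using hratio_scale[OF _ _ _ assms(3)] by blast
      have "(\<exists>g. invertible g \<and> hratio d (d + D) f g a = ?q * \<delta>) \<longleftrightarrow> (\<exists>g. invertible g \<and> hratio d d f g a = \<delta>)"
        using hs q by auto
      thus ?thesis using True is_max_scale[of f d D \<delta>] by (simp add: hstratum_def)
    next
      case False thus ?thesis by (auto simp: hstratum_def)
    qed
  qed
  show "(hunstable d (d + D) :: ('n, 'k) hpoly set) = hunstable d d"
  proof (rule Set.set_eqI)
    fix f :: "('n, 'k) hpoly"
    show "f \<in> hunstable d (d + D) \<longleftrightarrow> f \<in> hunstable d d"
    proof (cases "f \<in> homog d \<and> f \<noteq> 0")
      case True
      have "(\<exists>x>0. is_max_value d (d + D) f x) \<longleftrightarrow> (\<exists>x>0. is_max_value d d f x)"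
      proof
        assume "\<exists>x>0. is_max_value d (d + D) f x"
        then obtain x where x: "x > 0" "is_max_value d (d + D) f x" by blast
        have "x = ?q * (x / ?q)" using q by simp
        hence "is_max_value d d f (x / ?q)" using x(2) is_max_scale[of f d D "x / ?q"] True by simp
        thus "\<exists>x>0. is_max_value d d f x" using x(1) q by (intro exI[of _ "x / ?q"]) simp
      next
        assume "\<exists>x>0. is_max_value d d f x"
        then obtain x where x: "x > 0" "is_max_value d d f x" by blast
        hence "is_max_value d (d + D) f (?q * x)" using is_max_scale[of f d D x] True by simp
        thus "\<exists>x>0. is_max_value d (d + D) f x" using x(1) q by (intro exI[of _ "?q * x"]) simp
      qed
      thus ?thesis using True by (simp add: hunstable_def)
    next
      case False thus ?thesis by (auto simp: hunstable_def)
    qed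
  qed
qed


end
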